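(* Assume the growth conditions (G) and (C) hold with exponent $q_a\in\{0,1\}$. Let $q\ge1$. If $q_a=0$ assume $P$ has a finite $q$-th moment; if $q_a=1$ assume $P$ has a finite $(q+1)$-th moment. Let $g:\mathbb{R}^D\to\mathbb{R}^D$ be $C^1$ with $\|g(x)\|_2\le C_0(1+\|x\|_2^{q-1})$ and $\|\nabla g(x)\|_{\mathrm{op}}\le C_1(1+\|x\|_2^{q-1})$ for all $x\in\mathbb{R}^D$ and some constants $C_0,C_1>0$. Then $\mathbb{E}_{X\sim P}[\mathcal{T}_Pg(X)]=0$.
   Context: Setting: $P$ is a probability distribution on $\mathbb{R}^D$ with a positive continuously differentiable density $p$. Let $\sigma:\mathbb{R}^D\to\mathbb{R}^{D\times D'}$, $a(x)=\sigma(x)\sigma(x)^\top$, let $c:\mathbb{R}^D\to\mathbb{R}^{D\times D}$ be skew-symmetric ($c(x)=-c(x)^\top$), and $m=a+c$, with $x\mapsto p(x)m(x)$ continuously differentiable. For a matrix-valued $F$, $\langle\nabla,F(x)\rangle_i=\sum_j\partial_jF_{ji}(x)$. The drift is $b(x)=\langle\nabla,p(x)m(x)\rangle/(2p(x))$. For differentiable $g:\mathbb{R}^D\to\mathbb{R}^D$ let $(\nabla g(x))_{ij}=\partial_ig_j(x)$; the diffusion Stein operator is $\mathcal{T}_Pg(x)=\frac1{p(x)}\langle\nabla,p(x)m(x)g(x)\rangle=2\langle b(x),g(x)\rangle+\langle m(x),\nabla g(x)\rangle$ with $\langle A,B\rangle=\sum_{ij}A_{ij}B_{ij}$. $\|\cdot\|_{\mathrm{op}}$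 is the operator norm, $\|\cdot\|_F$ the Frobenius norm. Condition (G): there are $q_a\in\{0,1\}$ and $\lambda_b,\lambda_\sigma,\lambda_a>0$ with $\|b(x)\|_2\le\frac{\lambda_b}4(1+\|x\|_2)$, $\|\sigma(x)\|_F\le\frac{\lambda_\sigma}4(1+\|x\|_2)$, $\|a(x)\|_{\mathrm{op}}\le\frac{\lambda_a}4(1+\|x\|_2^{q_a+1})$ for all $x$. Condition (C): there is $\lambda_c>0$ with $\|c(x)\|_{\mathrm{op}}\le\frac{\lambda_c}4(1+\|x\|_2)^{q_a+1}$ for all $x$, with the same $q_a$. *)

theory Defs
  imports "HOL-Analysis.Analysis" "HOL-Probability.Probability"
begin

definition C1_on_UNIV :: "('a::euclidean_space \<Rightarrow> 'b::euclidean_space) \<Rightarrow> bool" where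
  "C1_on_UNIV f \<longleftrightarrow> (\<exists>f'. (\<forall>x. (f has_derivative blinfun_apply (f' x)) (at x)) \<and> continuous_on UNIV f')"

definition pderiv :: "'n::finite \<Rightarrow> (real^'n \<Rightarrow> real) \<Rightarrow> real^'n \<Rightarrow> real" where
  "pderiv j f x = frechet_derivative f (at x) (axis j 1)"

definition mat_div :: "(real^'n \<Rightarrow> real^'n^'n) \<Rightarrow> real^'n \<Rightarrow> real^'n::finite" where
  "mat_div F x = (\<chi> i. \<Sum>j\<in>UNIV. pderiv j (\<lambda>y. F y $ j $ i) x)"

definition jac :: "(real^'n \<Rightarrow> real^'n) \<Rightarrow> real^'n \<Rightarrow> real^'n^'n::finite" where
  "jac g x = (\<chi> i j. pderiv i (\<lambda>y. g y $ j) x)"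

definition frob_inner :: "real^'m^'n \<Rightarrow> real^'m^'n \<Rightarrow> real" where
  "frob_inner A B = (\<Sum>i\<in>UNIV. \<Sum>j\<in>UNIV. A $ i $ j * B $ i $ j)"

definition frob_norm :: "real^'m^'n \<Rightarrow> real" where
  "frob_norm A = sqrt (\<Sum>i\<in>UNIV. \<Sum>j\<in>UNIV. (A $ i $ j)^2)"

definition op_norm :: "real^'m^'n \<Rightarrow> real" where
  "op_norm A = onorm (\<lambda>v. A *v v)"

definition diff_a :: "(real^'n \<Rightarrow> real^'k^'n) \<Rightarrow> real^'n \<Rightarrow> real^'n^'n" where
  "diff_a sgm x = sgm x ** transpose (sgm x)"

definition drift :: "(real^'n \<Rightarrow> real) \<Rightarrow> (real^'n \<Rightarrow> real^'n^'n) \<Rightarrow> real^'n \<Rightarrow> real^'n::finite" where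
  "drift p m x = (1 / (2 * p x)) *\<^sub>R mat_div (\<lambda>y. p y *\<^sub>R m y) x"

definition stein_op :: "(real^'n \<Rightarrow> real) \<Rightarrow> (real^'n \<Rightarrow> real^'n^'n) \<Rightarrow> (real^'n \<Rightarrow> real^'n) \<Rightarrow> real^'n \<Rightarrow> real" where
  "stein_op p m g x = 2 * (drift p m x \<bullet> g x) + frob_inner (m x) (jac g x)"

(* t^e with the convention t^0 = 1 (also for t = 0) *)
definition rpow0 :: "real \<Rightarrow> real \<Rightarrow> real" where
  "rpow0 t e = (if e = 0 then 1 else t powr e)"

end

theory Submission
  imports Defs
begin


lemma lborel_shift:
  fixes f :: "'a::euclidean_space \<Rightarrow> real"
  assumes f[measurable]: "f \<in> borel_measurable borel"
  shows "(\<integral>x. f (c + x) \<partial>lborel) = (\<integral>x. f x \<partial>lborel)"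
    and "integrable lborel (\<lambda>x. f (c + x)) \<longleftrightarrow> integrable lborel f"
proof -
  have "(\<integral>x. f x \<partial>lborel) = (\<integral>x. f x \<partial>(distr lborel borel ((+) c)))"
    by (simp add: lborel_distr_plus)
  also have "\<dots> = (\<integral>x. f (c + x) \<partial>lborel)"
    by (subst integral_distr) auto
  finally show "(\<integral>x. f (c + x) \<partial>lborel) = (\<integral>x. f x \<partial>lborel)" by simp
  have "integrable lborel f \<longleftrightarrow> integrable (distr lborel borel ((+) c)) f"
    by (simp add: lborel_distr_plus)
  also have "\<dots> \<longleftrightarrow> integrable lborel (\<lambda>x. f (c + x))"
    by (subst integrable_distr_eq) (auto simp: o_def)
  finally show "integrable lborel (\<lambda>x. f (c + x)) \<longleftrightarrow> integrable lborel f" by simp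
qed



lemma ibp_lip:
  fixes F D phi :: "'a::euclidean_space \<Rightarrow> real" and v :: 'a
  assumes Fd: "\<And>x. ((\<lambda>t. F (x + t *\<^sub>R v)) has_real_derivative D x) (at 0)"
    and contF: "continuous_on UNIV F" and contD: "continuous_on UNIV D"
    and contphi: "continuous_on UNIV phi"
    and intF: "integrable lborel F"
    and lip: "\<And>x y. \<bar>phi x - phi y\<bar> \<le> L * norm (x - y)"
    and supp: "\<And>x. R < norm x \<Longrightarrow> phi x = 0"
    and bnd: "\<And>x. \<bar>phi x\<bar> \<le> 1"
  shows "integrable lborel (\<lambda>x. phi x * D x)"
    and "\<bar>\<integral>x. phi x * D x \<partial>lborel\<bar> \<le> L * norm v * (\<integral>x. \<bar>F x\<bar> \<partial>lborel)"
proof -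
  have mF[measurable]: "F \<in> borel_measurable borel" using contF by (rule borel_measurable_continuous_onI)
  have mD[measurable]: "D \<in> borel_measurable borel" using contD by (rule borel_measurable_continuous_onI)
  have mphi[measurable]: "phi \<in> borel_measurable borel" using contphi by (rule borel_measurable_continuous_onI)
  define t where "t k = 1 / real (Suc k)" for k
  have tpos: "t k > 0" "t k \<le> 1" for k by (auto simp: t_def)
  define Q where "Q k x = phi x * ((F (x + t k *\<^sub>R v) - F x) / t k)" for k x
  have derz: "((\<lambda>s. F (x + s *\<^sub>R v)) has_real_derivative D (x + z *\<^sub>R v)) (at z)" for x z
  proof -
    have "((\<lambda>s. F ((x + z *\<^sub>R v) + s *\<^sub>R v)) has_real_derivative D (x + z *\<^sub>R v)) (at 0)"
      by (rule Fd)
    then have "((\<lambda>s. F (x + (s + z) *\<^sub>R v)) has_real_derivative D (x + z *\<^sub>R v)) (at 0)"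
      by (simp add: algebra_simps)
    then show ?thesis using DERIV_shift[of "\<lambda>s. F (x + s *\<^sub>R v)" "D (x + z *\<^sub>R v)" 0 z] by simp
  qed
  have tlim: "filterlim t (at 0) sequentially"
  proof -
    have "t \<longlonglongrightarrow> 0" unfolding t_def using LIMSEQ_inverse_real_of_nat by (simp add: inverse_eq_divide)
    moreover have "\<forall>k. t k \<noteq> 0" using tpos by (metis less_irrefl)
    ultimately show ?thesis by (simp add: filterlim_at always_eventually)
  qed
  have lim: "(\<lambda>k. Q k x) \<longlonglongrightarrow> phi x * D x" for x
  proof -
    have "((\<lambda>y. (F (x + y *\<^sub>R v) - F (x + 0 *\<^sub>R v)) / (y - 0)) \<longlongrightarrow> D x) (at 0)"
      using Fd[of x] unfolding has_field_derivative_iff by simp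
    then have "((\<lambda>y. (F (x + y *\<^sub>R v) - F x) / y) \<longlongrightarrow> D x) (at 0)" by simp
    from filterlim_compose[OF this tlim]
    have "(\<lambda>k. (F (x + t k *\<^sub>R v) - F x) / t k) \<longlonglongrightarrow> D x" .
    then show ?thesis unfolding Q_def by (intro tendsto_mult tendsto_const)
  qed
  obtain M where M: "M > 0" "\<And>y. y \<in> cball 0 (R + norm v) \<Longrightarrow> norm (D y) \<le> M"
  proof -
    have "compact (D ` cball 0 (R + norm v))"
      by (rule compact_continuous_image) (auto intro: continuous_on_subset[OF contD])
    then have "bounded (D ` cball 0 (R + norm v))" by (rule compact_imp_bounded)
    then show ?thesis using that by (auto simp: bounded_pos)
  qed
  have Qbound: "norm (Q k x) \<le> M * indicator (cball 0 R) x" for k x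
  proof (cases "R < norm x")
    case True then show ?thesis by (simp add: Q_def supp)
  next
    case False
    obtain z where z: "0 < z" "z < t k"
      "F (x + t k *\<^sub>R v) - F (x + 0 *\<^sub>R v) = (t k - 0) * D (x + z *\<^sub>R v)"
      using MVT2[of 0 "t k" "\<lambda>s. F (x + s *\<^sub>R v)" "\<lambda>s. D (x + s *\<^sub>R v)"] tpos[of k] derz by blast
    have "norm (x + z *\<^sub>R v) \<le> norm x + z * norm v"
      using norm_triangle_ineq[of x "z *\<^sub>R v"] z by simp
    also have "\<dots> \<le> R + norm v"
      using False z tpos[of k] by (intro add_mono) (auto intro: mult_left_le_one_le)
    finally have "norm (D (x + z *\<^sub>R v)) \<le> M" using M by auto
    moreover have "Q k x = phi x * D (x + z *\<^sub>R v)"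
      using z tpos[of k] by (simp add: Q_def)
    moreover have "\<bar>phi x\<bar> * \<bar>D (x + z *\<^sub>R v)\<bar> \<le> 1 * M"
      by (rule mult_mono) (use bnd[of x] \<open>norm (D (x + z *\<^sub>R v)) \<le> M\<close> in auto)
    ultimately have "norm (Q k x) \<le> 1 * M"
      by (simp add: abs_mult)
    moreover have "indicator (cball 0 R) x = (1::real)" using False by (simp add: indicator_def)
    ultimately show ?thesis by simp
  qed
  have intInd: "integrable lborel (\<lambda>x. M * indicator (cball 0 R) x :: real)"
    by (intro integrable_mult_right integrable_real_indicator) (use emeasure_lborel_cball_finite in \<open>auto simp: top.not_eq_extremum\<close>)
  have mQ[measurable]: "Q k \<in> borel_measurable lborel" for k unfolding Q_def by measurable
  have DC: "integrable lborel (\<lambda>x. phi x * D x)" "(\<lambda>k. integral\<^sup>L lborel (Q k)) \<longlonglongrightarrow> (\<integral>x. phi x * D x \<partial>lborel)"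
  proof -
    have AEl: "AE x in lborel. (\<lambda>k. Q k x) \<longlonglongrightarrow> phi x * D x" by (rule AE_I2) (rule lim)
    have AEb: "\<And>k. AE x in lborel. norm (Q k x) \<le> M * indicator (cball 0 R) x" by (rule AE_I2) (rule Qbound)
    have mPD: "(\<lambda>x. phi x * D x) \<in> borel_measurable lborel" by measurable
    show "integrable lborel (\<lambda>x. phi x * D x)"
      by (rule integrable_dominated_convergence[OF mPD mQ intInd AEl AEb])
    show "(\<lambda>k. integral\<^sup>L lborel (Q k)) \<longlonglongrightarrow> (\<integral>x. phi x * D x \<partial>lborel)"
      by (rule integral_dominated_convergence[OF mPD mQ intInd AEl AEb])
  qed
  then show "integrable lborel (\<lambda>x. phi x * D x)" by simp
  have intFs: "integrable lborel (\<lambda>x. F (x + c))" for c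
    using lborel_shift(2)[OF mF, of c] intF by (simp add: add.commute)
  have Qint: "integral\<^sup>L lborel (Q k) = (\<integral>y. (phi (y - t k *\<^sub>R v) - phi y) / t k * F y \<partial>lborel)" for k
  proof -
    have i1: "integrable lborel (\<lambda>x. phi x * F (x + t k *\<^sub>R v))"
      by (rule Bochner_Integration.integrable_bound[OF intFs[of "t k *\<^sub>R v"]]) (measurable, intro AE_I2, auto simp: abs_mult intro: mult_left_le_one_le bnd)
    have i2: "integrable lborel (\<lambda>x. phi x * F x)"
      by (rule Bochner_Integration.integrable_bound[OF intF]) (measurable, intro AE_I2, auto simp: abs_mult intro: mult_left_le_one_le bnd)
    have i3: "integrable lborel (\<lambda>y. phi (y - t k *\<^sub>R v) * F y)"
      by (rule Bochner_Integration.integrable_bound[OF intF]) (measurable, intro AE_I2, auto simp: abs_mult intro: mult_left_le_one_le bnd)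
    have sh: "(\<integral>x. phi x * F (x + t k *\<^sub>R v) \<partial>lborel) = (\<integral>y. phi (y - t k *\<^sub>R v) * F y \<partial>lborel)"
      using lborel_shift(1)[of "\<lambda>y. phi (y - t k *\<^sub>R v) * F y" "t k *\<^sub>R v"] by (simp add: add.commute)
    have "integral\<^sup>L lborel (Q k) = (\<integral>x. (phi x * F (x + t k *\<^sub>R v) - phi x * F x) / t k \<partial>lborel)"
      unfolding Q_def by (simp add: algebra_simps)
    also have "\<dots> = ((\<integral>x. phi x * F (x + t k *\<^sub>R v) \<partial>lborel) - (\<integral>x. phi x * F x \<partial>lborel)) / t k"
      using i1 i2 by simp
    also have "\<dots> = ((\<integral>y. phi (y - t k *\<^sub>R v) * F y \<partial>lborel) - (\<integral>x. phi x * F x \<partial>lborel)) / t k"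
      by (simp add: sh)
    also have "\<dots> = (\<integral>y. (phi (y - t k *\<^sub>R v) * F y - phi y * F y) / t k \<partial>lborel)"
      using i3 i2 by simp
    finally show ?thesis by (simp add: algebra_simps)
  qed
  have Qle: "\<bar>integral\<^sup>L lborel (Q k)\<bar> \<le> L * norm v * (\<integral>x. \<bar>F x\<bar> \<partial>lborel)" for k
  proof -
    have pw: "\<bar>(phi (y - t k *\<^sub>R v) - phi y) / t k * F y\<bar> \<le> L * norm v * \<bar>F y\<bar>" for y
    proof -
      have "\<bar>phi (y - t k *\<^sub>R v) - phi y\<bar> \<le> L * (t k * norm v)"
        using lip[of "y - t k *\<^sub>R v" y] tpos[of k] by simp
      then have "\<bar>(phi (y - t k *\<^sub>R v) - phi y) / t k\<bar> \<le> L * norm v"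
        using tpos[of k] by (simp add: divide_le_eq mult_ac)
      then have "\<bar>(phi (y - t k *\<^sub>R v) - phi y) / t k\<bar> * \<bar>F y\<bar> \<le> L * norm v * \<bar>F y\<bar>"
        by (rule mult_right_mono) simp
      then show ?thesis by (simp only: abs_mult)
    qed
    have iL: "integrable lborel (\<lambda>y. L * norm v * \<bar>F y\<bar>)"
      using intF by (intro integrable_mult_right integrable_abs)
    have iQ: "integrable lborel (\<lambda>y. (phi (y - t k *\<^sub>R v) - phi y) / t k * F y)"
      by (rule Bochner_Integration.integrable_bound[OF iL]) (measurable, intro AE_I2, metis pw real_norm_def abs_ge_self order_trans)
    have "\<bar>integral\<^sup>L lborel (Q k)\<bar> \<le> (\<integral>y. \<bar>(phi (y - t k *\<^sub>R v) - phi y) / t k * F y\<bar> \<partial>lborel)"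
      unfolding Qint by (rule integral_abs_bound)
    also have "\<dots> \<le> (\<integral>y. L * norm v * \<bar>F y\<bar> \<partial>lborel)"
      by (rule integral_mono[OF integrable_abs[OF iQ] iL pw])
    also have "\<dots> = L * norm v * (\<integral>x. \<bar>F x\<bar> \<partial>lborel)" by simp
    finally show ?thesis .
  qed
  show "\<bar>\<integral>x. phi x * D x \<partial>lborel\<bar> \<le> L * norm v * (\<integral>x. \<bar>F x\<bar> \<partial>lborel)"
    using tendsto_rabs[OF DC(2)] Qle by (intro LIMSEQ_le_const2) auto
qed

lemma div_zero:
  fixes F D :: "'n::finite \<Rightarrow> real^'n \<Rightarrow> real"
  assumes Fd: "\<And>j x. ((\<lambda>t. F j (x + t *\<^sub>R axis j 1)) has_real_derivative D j x) (at 0)"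
    and contF: "\<And>j. continuous_on UNIV (F j)" and contD: "\<And>j. continuous_on UNIV (D j)"
    and intF: "\<And>j. integrable lborel (F j)"
    and intS: "integrable lborel (\<lambda>x. \<Sum>j\<in>UNIV. D j x)"
  shows "(\<integral>x. (\<Sum>j\<in>UNIV. D j x) \<partial>lborel) = 0"
proof -
  have mD[measurable]: "D j \<in> borel_measurable borel" for j using contD by (rule borel_measurable_continuous_onI)
  define R where "R k = real (Suc k)" for k
  have Rpos: "R k > 0" for k by (simp add: R_def)
  define phi where "phi k x = max 0 (1 - norm x / R k)" for k and x :: "real^'n"
  define S where "S = (\<Sum>j\<in>UNIV. \<integral>x. \<bar>F j x\<bar> \<partial>lborel)"
  have lipk: "\<bar>phi k x - phi k y\<bar> \<le> (1 / R k) * norm (x - y)" for k x y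
  proof -
    have "\<bar>phi k x - phi k y\<bar> \<le> \<bar>(1 - norm x / R k) - (1 - norm y / R k)\<bar>"
      unfolding phi_def by (simp add: max_def abs_if)
    also have "\<dots> = \<bar>(norm y - norm x) / R k\<bar>" by (simp add: diff_divide_distrib)
    also have "\<dots> = \<bar>norm y - norm x\<bar> / R k" using Rpos[of k] by simp
    also have "\<dots> \<le> norm (x - y) / R k" using Rpos[of k]
      by (intro divide_right_mono) (auto simp: norm_minus_commute intro: order_trans[OF norm_triangle_ineq3])
    finally show ?thesis by simp
  qed
  have suppk: "R k < norm x \<Longrightarrow> phi k x = 0" for k x
    using Rpos[of k] by (simp add: phi_def max_def field_simps)
  have bndk: "\<bar>phi k x\<bar> \<le> 1" for k x
    using Rpos[of k] by (simp add: phi_def max_def field_simps)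
  have contk: "continuous_on UNIV (phi k)" for k
    unfolding phi_def by (intro continuous_intros) (use Rpos[of k] in auto)
  have A: "integrable lborel (\<lambda>x. phi k x * D j x)"
    "\<bar>\<integral>x. phi k x * D j x \<partial>lborel\<bar> \<le> (1 / R k) * norm (axis j (1::real) :: real^'n) * (\<integral>x. \<bar>F j x\<bar> \<partial>lborel)" for k j
    using ibp_lip[OF Fd contF contD contk intF lipk suppk bndk] by auto
  have Ik: "\<bar>\<integral>x. phi k x * (\<Sum>j\<in>UNIV. D j x) \<partial>lborel\<bar> \<le> S / R k" for k
  proof -
    have "(\<integral>x. phi k x * (\<Sum>j\<in>UNIV. D j x) \<partial>lborel) = (\<integral>x. (\<Sum>j\<in>UNIV. phi k x * D j x) \<partial>lborel)"
      by (simp add: sum_distrib_left)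
    also have "\<dots> = (\<Sum>j\<in>UNIV. \<integral>x. phi k x * D j x \<partial>lborel)"
      by (rule Bochner_Integration.integral_sum[where I=UNIV and f="\<lambda>j x. phi k x * D j x"]) (use A in auto)
    finally have "\<bar>\<integral>x. phi k x * (\<Sum>j\<in>UNIV. D j x) \<partial>lborel\<bar> \<le> (\<Sum>j\<in>UNIV. \<bar>\<integral>x. phi k x * D j x \<partial>lborel\<bar>)"
      by (simp add: sum_abs)
    also have "\<dots> \<le> (\<Sum>j\<in>UNIV. (1 / R k) * (\<integral>x. \<bar>F j x\<bar> \<partial>lborel))"
      by (rule sum_mono) (use A in \<open>simp\<close>)
    also have "\<dots> = S / R k" by (simp add: S_def sum_divide_distrib)
    finally show ?thesis .
  qed
  have phil: "(\<lambda>k. phi k x) \<longlonglongrightarrow> 1" for x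
  proof -
    have "(\<lambda>k. norm x * inverse (real (Suc k))) \<longlonglongrightarrow> 0"
      by (rule tendsto_mult_right_zero[OF LIMSEQ_inverse_real_of_nat])
    then have "(\<lambda>k. max 0 (1 - norm x * inverse (real (Suc k)))) \<longlonglongrightarrow> max 0 (1 - 0)"
      by (intro tendsto_max tendsto_diff tendsto_const)
    then show ?thesis by (simp add: phi_def R_def divide_inverse)
  qed
  have DC: "(\<lambda>k. \<integral>x. phi k x * (\<Sum>j\<in>UNIV. D j x) \<partial>lborel) \<longlonglongrightarrow> (\<integral>x. (\<Sum>j\<in>UNIV. D j x) \<partial>lborel)"
  proof -
    have mS: "(\<lambda>x. \<Sum>j\<in>UNIV. D j x) \<in> borel_measurable lborel" by measurable
    have mk: "\<And>k. (\<lambda>x. phi k x * (\<Sum>j\<in>UNIV. D j x)) \<in> borel_measurable lborel"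
      using borel_measurable_continuous_onI[OF contk] by measurable
    have iw: "integrable lborel (\<lambda>x. \<bar>\<Sum>j\<in>UNIV. D j x\<bar>)" using intS by (rule integrable_abs)
    have AEl: "AE x in lborel. (\<lambda>k. phi k x * (\<Sum>j\<in>UNIV. D j x)) \<longlonglongrightarrow> (\<Sum>j\<in>UNIV. D j x)"
    proof (rule AE_I2)
      fix x
      show "(\<lambda>k. phi k x * (\<Sum>j\<in>UNIV. D j x)) \<longlonglongrightarrow> (\<Sum>j\<in>UNIV. D j x)"
        using tendsto_mult[OF phil[of x] tendsto_const[of "\<Sum>j\<in>UNIV. D j x"]] by simp
    qed
    have AEb: "\<And>k. AE x in lborel. norm (phi k x * (\<Sum>j\<in>UNIV. D j x)) \<le> \<bar>\<Sum>j\<in>UNIV. D j x\<bar>"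
    proof (rule AE_I2)
      fix k x
      show "norm (phi k x * (\<Sum>j\<in>UNIV. D j x)) \<le> \<bar>\<Sum>j\<in>UNIV. D j x\<bar>"
        using bndk[of k x] by (simp add: abs_mult mult_left_le_one_le)
    qed
    show ?thesis by (rule integral_dominated_convergence[OF mS mk iw AEl AEb])
  qed
  have "(\<lambda>k. S / R k) \<longlonglongrightarrow> 0"
    unfolding R_def divide_inverse by (rule tendsto_mult_right_zero[OF LIMSEQ_inverse_real_of_nat])
  then have "\<bar>\<integral>x. (\<Sum>j\<in>UNIV. D j x) \<partial>lborel\<bar> \<le> 0"
    using tendsto_rabs[OF DC] Ik by (intro tendsto_le[OF trivial_limit_sequentially]) auto
  then show ?thesis by simp
qed



lemma poly_bound:
  fixes r q :: real and qa :: nat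
  assumes r: "r \<ge> 0" and q: "q \<ge> 1" and qa: "qa \<in> {0,1}"
  shows "(1 + r) ^ (qa + 1) * (1 + rpow0 r (q - 1)) \<le> 8 * (1 + r powr (q + real qa))"
proof (cases "r \<le> 1")
  case True
  have a: "(1 + r) ^ (qa + 1) \<le> 4"
  proof -
    have "(1 + r) ^ (qa + 1) \<le> 2 ^ (qa + 1)" using True r by (intro power_mono) auto
    also have "\<dots> \<le> 4" using qa by auto
    finally show ?thesis .
  qed
  have b: "1 + rpow0 r (q - 1) \<le> 2"
  proof -
    have "rpow0 r (q - 1) \<le> 1"
      unfolding rpow0_def using True r q by (auto simp: powr_mono2) (metis diff_ge_0_iff_ge powr_mono2 powr_one_eq_one)
    then show ?thesis by simp
  qed
  have b0: "0 \<le> 1 + rpow0 r (q - 1)" unfolding rpow0_def by auto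
  have "(1 + r) ^ (qa + 1) * (1 + rpow0 r (q - 1)) \<le> 4 * 2"
    using a b b0 by (intro mult_mono) auto
  also have "\<dots> \<le> 8 * (1 + r powr (q + real qa))" by simp
  finally show ?thesis .
next
  case False
  then have r1: "r \<ge> 1" by simp
  have a: "(1 + r) ^ (qa + 1) \<le> 4 * r powr (real qa + 1)"
  proof -
    have "(1 + r) ^ (qa + 1) \<le> (2 * r) ^ (qa + 1)" using r1 by (intro power_mono) auto
    also have "\<dots> = 2 ^ (qa + 1) * r ^ (qa + 1)" by (simp add: power_mult_distrib)
    also have "\<dots> \<le> 4 * r ^ (qa + 1)" using qa r by (intro mult_right_mono) auto
    also have "r ^ (qa + 1) = r powr (real (qa + 1))" using r1 by (simp only: powr_realpow)
    also have "real (qa + 1) = real qa + 1" by simp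
    finally show ?thesis .
  qed
  have ge1: "r powr (q - 1) \<ge> 1" using r1 q by (intro ge_one_powr_ge_zero) auto
  have b: "1 + rpow0 r (q - 1) \<le> 2 * r powr (q - 1)"
    unfolding rpow0_def using ge1 r1 by auto
  have b0: "0 \<le> 1 + rpow0 r (q - 1)" unfolding rpow0_def by auto
  have "(1 + r) ^ (qa + 1) * (1 + rpow0 r (q - 1)) \<le> (4 * r powr (real qa + 1)) * (2 * r powr (q - 1))"
    using a b b0 by (intro mult_mono) auto
  also have "\<dots> = 8 * (r powr (real qa + 1) * r powr (q - 1))" by simp
  also have "r powr (real qa + 1) * r powr (q - 1) = r powr (q + real qa)"
    using r1 by (simp add: powr_add[symmetric] add.commute)
  also have "8 * r powr (q + real qa) \<le> 8 * (1 + r powr (q + real qa))" by simp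
  finally show ?thesis .
qed



lemma entry_le_op: "\<bar>A $ i $ j\<bar> \<le> op_norm (A :: real^'m^'n)"
proof -
  have "A $ i $ j = (A *v axis j 1) $ i"
    by (simp add: matrix_vector_mult_def axis_def if_distrib cong: if_cong)
  also have "\<bar>\<dots>\<bar> \<le> norm (A *v axis j 1)" by (rule component_le_norm_cart)
  also have "\<dots> \<le> onorm ((*v) A) * norm (axis j (1::real) :: real^'m)"
    by (rule onorm[OF matrix_vector_mul_bounded_linear])
  finally show ?thesis by (simp add: op_norm_def)
qed

lemma op_add: "op_norm (A + B) \<le> op_norm A + op_norm (B :: real^'m^'n)"
  unfolding op_norm_def matrix_vector_mult_add_rdistrib
  by (rule onorm_triangle[OF matrix_vector_mul_bounded_linear matrix_vector_mul_bounded_linear])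

lemma dir_deriv:
  fixes f :: "'a::real_normed_vector \<Rightarrow> real"
  assumes "(f has_derivative f') (at x)"
  shows "((\<lambda>t. f (x + t *\<^sub>R v)) has_real_derivative f' v) (at 0)"
proof -
  have l: "linear f'" using assms by (rule has_derivative_linear)
  have "((\<lambda>t. x + t *\<^sub>R v) has_derivative (\<lambda>t. t *\<^sub>R v)) (at 0)"
    by (auto intro!: derivative_eq_intros)
  moreover have "(f has_derivative f') (at (x + 0 *\<^sub>R v))" using assms by simp
  ultimately have "((\<lambda>t. f (x + t *\<^sub>R v)) has_derivative (\<lambda>t. f' (t *\<^sub>R v))) (at 0)"
    by (rule has_derivative_compose[of "\<lambda>t. x + t *\<^sub>R v" _ 0 UNIV f f', unfolded o_def])
  moreover have "(\<lambda>t. f' (t *\<^sub>R v)) = (*) (f' v)"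
    using linear_scale[OF l] by (auto simp: mult.commute)
  ultimately show ?thesis by (simp add: has_field_derivative_def)
qed

lemma pderiv_eq: "(f has_derivative f') (at x) \<Longrightarrow> pderiv j f x = f' (axis j 1)"
  unfolding pderiv_def by (metis frechet_derivative_at)

lemma comp_deriv2:
  assumes "(f has_derivative f') (at x)"
  shows "((\<lambda>y. f y $ j $ i) has_derivative (\<lambda>h. f' h $ j $ i)) (at x)"
  using bounded_linear.has_derivative[OF bounded_linear_vec_nth
          bounded_linear.has_derivative[OF bounded_linear_vec_nth assms]] .

lemma comp_deriv1:
  assumes "(f has_derivative f') (at x)"
  shows "((\<lambda>y. f y $ i) has_derivative (\<lambda>h. f' h $ i)) (at x)"
  using bounded_linear.has_derivative[OF bounded_linear_vec_nth assms] .

lemma cont_comp1: "continuous_on S f \<Longrightarrow> continuous_on S (\<lambda>x. f x $ i)"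
  by (intro continuous_intros)

lemma cont_blin: "continuous_on S f \<Longrightarrow> continuous_on S (\<lambda>x. blinfun_apply (f x) v)"
  by (intro continuous_intros)

lemma op_nonneg: "0 \<le> op_norm (A :: real^'m^'n)"
  unfolding op_norm_def by (rule onorm_pos_le[OF matrix_vector_mul_bounded_linear])

lemma frob_le: "\<bar>frob_inner A B\<bar> \<le> real CARD('n) * real CARD('m) * (op_norm A * op_norm (B :: real^'m^'n))"
proof -
  have "\<bar>frob_inner A B\<bar> \<le> (\<Sum>i\<in>UNIV. \<bar>\<Sum>j\<in>UNIV. A $ i $ j * B $ i $ j\<bar>)"
    unfolding frob_inner_def by (rule sum_abs)
  also have "\<dots> \<le> (\<Sum>i\<in>(UNIV::'n set). \<Sum>j\<in>(UNIV::'m set). op_norm A * op_norm B)"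
  proof (rule sum_mono)
    fix i
    have "\<bar>\<Sum>j\<in>UNIV. A $ i $ j * B $ i $ j\<bar> \<le> (\<Sum>j\<in>UNIV. \<bar>A $ i $ j * B $ i $ j\<bar>)" by (rule sum_abs)
    also have "\<dots> \<le> (\<Sum>j\<in>(UNIV::'m set). op_norm A * op_norm B)"
      by (rule sum_mono) (simp add: abs_mult mult_mono entry_le_op op_nonneg)
    finally show "\<bar>\<Sum>j\<in>UNIV. A $ i $ j * B $ i $ j\<bar> \<le> (\<Sum>j\<in>(UNIV::'m set). op_norm A * op_norm B)" .
  qed
  also have "\<dots> = real CARD('n) * real CARD('m) * (op_norm A * op_norm B)" by simp
  finally show ?thesis .
qed



theorem mainTheorem3:
  fixes P :: "(real^'n) measure"
    and p :: "real^'n \<Rightarrow> real"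
    and sgm :: "real^'n \<Rightarrow> real^'k^'n"
    and c :: "real^'n \<Rightarrow> real^'n^'n"
    and g :: "real^'n \<Rightarrow> real^'n"
    and qa :: nat and q lam_b lam_sigma lam_a lam_c C0 C1 :: real
  assumes P_def: "P = density lborel (\<lambda>x. ennreal (p x))"
    and P_prob: "prob_space P"
    and p_pos: "\<forall>x. p x > 0"
    and p_C1: "C1_on_UNIV p"
    and c_skew: "\<forall>x. transpose (c x) = - c x"
    and pm_C1: "C1_on_UNIV (\<lambda>x. p x *\<^sub>R (diff_a sgm x + c x))"
    and qa01: "qa \<in> {0, 1}"
    and lams: "lam_b > 0" "lam_sigma > 0" "lam_a > 0" "lam_c > 0"
    and G_b: "\<forall>x. norm (drift p (\<lambda>y. diff_a sgm y + c y) x) \<le> lam_b / 4 * (1 + norm x)"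
    and G_sigma: "\<forall>x. frob_norm (sgm x) \<le> lam_sigma / 4 * (1 + norm x)"
    and G_a: "\<forall>x. op_norm (diff_a sgm x) \<le> lam_a / 4 * (1 + norm x ^ (qa + 1))"
    and C_c: "\<forall>x. op_norm (c x) \<le> lam_c / 4 * (1 + norm x) ^ (qa + 1)"
    and q_ge: "q \<ge> 1"
    and moment0: "qa = 0 \<Longrightarrow> integrable P (\<lambda>x. norm x powr q)"
    and moment1: "qa = 1 \<Longrightarrow> integrable P (\<lambda>x. norm x powr (q + 1))"
    and g_C1: "C1_on_UNIV g"
    and C_pos: "C0 > 0" "C1 > 0"
    and g_bound: "\<forall>x. norm (g x) \<le> C0 * (1 + rpow0 (norm x) (q - 1))"
    and Dg_bound: "\<forall>x. op_norm (jac g x) \<le> C1 * (1 + rpow0 (norm x) (q - 1))"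
  shows "integrable P (stein_op p (\<lambda>y. diff_a sgm y + c y) g)
         \<and> (\<integral>x. stein_op p (\<lambda>y. diff_a sgm y + c y) g x \<partial>P) = 0"
proof -
  obtain PM' where PMd: "\<And>x. ((\<lambda>x. p x *\<^sub>R (diff_a sgm x + c x)) has_derivative blinfun_apply (PM' x)) (at x)"
    and PMc: "continuous_on UNIV PM'" using pm_C1 unfolding C1_on_UNIV_def by blast
  obtain G' where Gd: "\<And>x. (g has_derivative blinfun_apply (G' x)) (at x)"
    and Gc: "continuous_on UNIV G'" using g_C1 unfolding C1_on_UNIV_def by blast
  obtain P' where Pd: "\<And>x. (p has_derivative blinfun_apply (P' x)) (at x)"
    using p_C1 unfolding C1_on_UNIV_def by blast
  define m where "m = (\<lambda>y. diff_a sgm y + c y)"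
  define PM where "PM = (\<lambda>y. p y *\<^sub>R m y)"
  have PMd': "(PM has_derivative blinfun_apply (PM' x)) (at x)" for x
    using PMd[of x] by (simp add: PM_def m_def)
  have contp: "continuous_on UNIV p"
    by (rule continuous_at_imp_continuous_on) (use Pd has_derivative_continuous in blast)
  have contg: "continuous_on UNIV g"
    by (rule continuous_at_imp_continuous_on) (use Gd has_derivative_continuous in blast)
  have contPM: "continuous_on UNIV PM"
    by (rule continuous_at_imp_continuous_on) (use PMd' has_derivative_continuous in blast)
  define F where "F j x = (\<Sum>i\<in>UNIV. PM x $ j $ i * g x $ i)" for j x
  define D where "D j x = (\<Sum>i\<in>UNIV. PM x $ j $ i * (G' x (axis j 1) $ i) + (PM' x (axis j 1) $ j $ i) * g x $ i)" for j x
  have Fder: "(F j has_derivative (\<lambda>h. \<Sum>i\<in>UNIV. PM x $ j $ i * (G' x h $ i) + (PM' x h $ j $ i) * g x $ i)) (at x)" for j x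
    unfolding F_def
    by (intro has_derivative_sum has_derivative_mult comp_deriv2[OF PMd'] comp_deriv1[OF Gd])
  have Fd: "((\<lambda>t. F j (x + t *\<^sub>R axis j 1)) has_real_derivative D j x) (at 0)" for j x
    using dir_deriv[OF Fder] by (simp add: D_def)
  have contF: "continuous_on UNIV (F j)" for j
    unfolding F_def by (intro continuous_intros cont_comp1 contPM contg)
  have contD: "continuous_on UNIV (D j)" for j
    unfolding D_def by (intro continuous_intros cont_comp1 contPM contg cont_blin PMc Gc)
  have stein_eq: "p x * stein_op p m g x = (\<Sum>j\<in>UNIV. D j x)" for x
  proof -
    have md: "mat_div PM x $ i = (\<Sum>j\<in>UNIV. PM' x (axis j 1) $ j $ i)" for i
      unfolding mat_div_def using pderiv_eq[OF comp_deriv2[OF PMd']] by simp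
    have jd: "jac g x $ i $ j = G' x (axis i 1) $ j" for i j
      unfolding jac_def using pderiv_eq[OF comp_deriv1[OF Gd]] by simp
    have PMe: "PM x $ i $ j = p x * m x $ i $ j" for i j by (simp add: PM_def)
    have px: "p x \<noteq> 0" using p_pos by (metis less_irrefl)
    have dr: "drift p m x = (1 / (2 * p x)) *\<^sub>R mat_div PM x"
      unfolding drift_def PM_def ..
    have "p x * stein_op p m g x
        = (\<Sum>i\<in>UNIV. (\<Sum>j\<in>UNIV. PM' x (axis j 1) $ j $ i) * g x $ i)
          + (\<Sum>i\<in>UNIV. \<Sum>j\<in>UNIV. PM x $ i $ j * G' x (axis i 1) $ j)"
    proof -
      have s1: "2 * (drift p m x \<bullet> g x) = (1 / p x) * (\<Sum>i\<in>UNIV. mat_div PM x $ i * g x $ i)"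
        unfolding dr inner_vec_def by (simp add: sum_distrib_left)
      have s2: "p x * frob_inner (m x) (jac g x) = (\<Sum>i\<in>UNIV. \<Sum>j\<in>UNIV. PM x $ i $ j * G' x (axis i 1) $ j)"
        unfolding frob_inner_def by (simp add: jd PMe sum_distrib_left mult.assoc)
      have "p x * stein_op p m g x = p x * (2 * (drift p m x \<bullet> g x)) + p x * frob_inner (m x) (jac g x)"
        unfolding stein_op_def by (simp add: distrib_left)
      also have "\<dots> = (\<Sum>i\<in>UNIV. mat_div PM x $ i * g x $ i) + (\<Sum>i\<in>UNIV. \<Sum>j\<in>UNIV. PM x $ i $ j * G' x (axis i 1) $ j)"
        unfolding s1 s2 using px by simp
      finally show ?thesis by (simp add: md)
    qed
    also have "\<dots> = (\<Sum>j\<in>UNIV. \<Sum>i\<in>UNIV. (PM' x (axis j 1) $ j $ i) * g x $ i)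
          + (\<Sum>j\<in>UNIV. \<Sum>i\<in>UNIV. PM x $ j $ i * G' x (axis j 1) $ i)"
    proof -
      have "(\<Sum>i\<in>UNIV. (\<Sum>j\<in>UNIV. PM' x (axis j 1) $ j $ i) * g x $ i)
          = (\<Sum>i\<in>UNIV. \<Sum>j\<in>UNIV. PM' x (axis j 1) $ j $ i * g x $ i)"
        by (simp add: sum_distrib_right)
      also have "\<dots> = (\<Sum>j\<in>UNIV. \<Sum>i\<in>UNIV. PM' x (axis j 1) $ j $ i * g x $ i)"
        by (rule sum.swap)
      finally show ?thesis by simp
    qed
    also have "\<dots> = (\<Sum>j\<in>UNIV. D j x)"
      unfolding D_def by (simp add: sum.distrib)
    finally show ?thesis .
  qed
  have px: "p x > 0" for x using p_pos by blast
  have stein_fun: "stein_op p m g = (\<lambda>x. (\<Sum>j\<in>UNIV. D j x) / p x)"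
  proof
    fix x show "stein_op p m g x = (\<Sum>j\<in>UNIV. D j x) / p x"
      using stein_eq[of x] px[of x] by (simp add: field_simps)
  qed
  have mp[measurable]: "p \<in> borel_measurable borel" using contp by (rule borel_measurable_continuous_onI)
  have mD[measurable]: "D j \<in> borel_measurable borel" for j using contD by (rule borel_measurable_continuous_onI)
  have mS[measurable]: "stein_op p m g \<in> borel_measurable lborel"
    unfolding stein_fun by measurable
  define e where "e = q + real qa"
  have mom: "integrable P (\<lambda>x. norm x powr e)" using qa01 moment0 moment1 by (auto simp: e_def)
  have intP1: "integrable P (\<lambda>x. 1 + norm x powr e)"
    by (rule Bochner_Integration.integrable_add[OF finite_measure.integrable_const[OF prob_space.axioms(1)[OF P_prob]] mom])
  have intw: "integrable lborel (\<lambda>x. p x * (1 + norm x powr e))"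
    using intP1 unfolding P_def by (subst (asm) integrable_density) (auto intro: less_imp_le[OF px])
  define r where "r x = norm x" for x :: "real^'n"
  have polyb: "(1 + r x) ^ (qa + 1) * (1 + rpow0 (r x) (q - 1)) \<le> 8 * (1 + r x powr e)" for x
    unfolding e_def by (rule poly_bound) (use q_ge qa01 in \<open>auto simp: r_def\<close>)
  have rp0: "0 \<le> 1 + rpow0 (r x) (q - 1)" for x unfolding rpow0_def by auto
  have opm: "op_norm (m x) \<le> (lam_a + lam_c) / 4 * (1 + r x) ^ (qa + 1)" for x
  proof -
    have "1 + r x ^ (qa + 1) \<le> (1 + r x) ^ (qa + 1)"
      using qa01 by (auto simp: r_def power2_eq_square algebra_simps)
    then have "op_norm (diff_a sgm x) \<le> lam_a / 4 * (1 + r x) ^ (qa + 1)"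
      using G_a[rule_format, of x] lams by (simp add: r_def) (smt (verit) mult_left_mono)
    then show ?thesis using op_add[of "diff_a sgm x" "c x"] C_c[rule_format, of x]
      by (simp add: m_def r_def algebra_simps add_divide_distrib)
  qed
  have Fb: "\<bar>F j x\<bar> \<le> (real CARD('n) * ((lam_a + lam_c) / 4) * C0 * 8) * (p x * (1 + r x powr e))" for j x
  proof -
    have "\<bar>F j x\<bar> \<le> (\<Sum>i\<in>UNIV. \<bar>PM x $ j $ i * g x $ i\<bar>)" unfolding F_def by (rule sum_abs)
    also have "\<dots> \<le> (\<Sum>i\<in>(UNIV::'n set). p x * (op_norm (m x) * norm (g x)))"
    proof (rule sum_mono)
      fix i
      have "\<bar>PM x $ j $ i * g x $ i\<bar> = p x * (\<bar>m x $ j $ i\<bar> * \<bar>g x $ i\<bar>)"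
        using px[of x] by (simp add: PM_def abs_mult)
      also have "\<dots> \<le> p x * (op_norm (m x) * norm (g x))"
        using px[of x] by (intro mult_left_mono mult_mono entry_le_op component_le_norm_cart op_nonneg) auto
      finally show "\<bar>PM x $ j $ i * g x $ i\<bar> \<le> p x * (op_norm (m x) * norm (g x))" .
    qed
    also have "\<dots> = real CARD('n) * (p x * (op_norm (m x) * norm (g x)))" by simp
    also have "\<dots> \<le> real CARD('n) * (p x * (((lam_a + lam_c) / 4 * (1 + r x) ^ (qa + 1)) * (C0 * (1 + rpow0 (r x) (q - 1)))))"
      using px[of x] lams g_bound[rule_format, of x] opm[of x]
      by (intro mult_left_mono mult_mono) (auto simp: r_def)
    also have "\<dots> = real CARD('n) * ((lam_a + lam_c) / 4) * C0 * (p x * ((1 + r x) ^ (qa + 1) * (1 + rpow0 (r x) (q - 1))))"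
      by (simp add: mult_ac)
    also have "\<dots> \<le> real CARD('n) * ((lam_a + lam_c) / 4) * C0 * (p x * (8 * (1 + r x powr e)))"
      using px[of x] lams C_pos polyb[of x] by (intro mult_left_mono) auto
    finally show ?thesis by (simp only: mult_ac)
  qed
  define K2 where "K2 = (2 * (lam_b / 4) * C0 + real CARD('n) * real CARD('n) * ((lam_a + lam_c) / 4) * C1) * 8"
  have Sb: "\<bar>stein_op p m g x\<bar> \<le> K2 * (1 + r x powr e)" for x
  proof -
    have pw1: "1 + r x \<le> (1 + r x) ^ (qa + 1)"
      using qa01 by (auto simp: r_def power2_eq_square algebra_simps)
    have "\<bar>drift p m x \<bullet> g x\<bar> \<le> norm (drift p m x) * norm (g x)" by (rule Cauchy_Schwarz_ineq2)
    also have "\<dots> \<le> (lam_b / 4 * (1 + r x) ^ (qa + 1)) * (C0 * (1 + rpow0 (r x) (q - 1)))"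
    proof (rule mult_mono)
      show "norm (drift p m x) \<le> lam_b / 4 * (1 + r x) ^ (qa + 1)"
      proof -
        have "lam_b / 4 * (1 + r x) \<le> lam_b / 4 * (1 + r x) ^ (qa + 1)"
          using pw1 lams by (intro mult_left_mono) auto
        then show ?thesis using G_b[rule_format, of x] unfolding m_def r_def by linarith
      qed
      show "norm (g x) \<le> C0 * (1 + rpow0 (r x) (q - 1))" using g_bound by (simp add: r_def)
    qed (use lams in \<open>auto simp: r_def\<close>)
    finally have b1: "\<bar>drift p m x \<bullet> g x\<bar> \<le> lam_b / 4 * C0 * ((1 + r x) ^ (qa + 1) * (1 + rpow0 (r x) (q - 1)))"
      by (simp add: mult_ac)
    have "\<bar>frob_inner (m x) (jac g x)\<bar> \<le> real CARD('n) * real CARD('n) * (op_norm (m x) * op_norm (jac g x))"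
      by (rule frob_le)
    also have "\<dots> \<le> real CARD('n) * real CARD('n) * (((lam_a + lam_c) / 4 * (1 + r x) ^ (qa + 1)) * (C1 * (1 + rpow0 (r x) (q - 1))))"
      using Dg_bound[rule_format, of x] opm[of x] lams
      by (intro mult_left_mono mult_mono op_nonneg) (auto simp: r_def)
    finally have b2: "\<bar>frob_inner (m x) (jac g x)\<bar> \<le> real CARD('n) * real CARD('n) * ((lam_a + lam_c) / 4) * C1 * ((1 + r x) ^ (qa + 1) * (1 + rpow0 (r x) (q - 1)))"
      by (simp add: mult_ac)
    have "\<bar>stein_op p m g x\<bar> \<le> 2 * \<bar>drift p m x \<bullet> g x\<bar> + \<bar>frob_inner (m x) (jac g x)\<bar>"
      unfolding stein_op_def by (simp add: abs_mult)
    also have "\<dots> \<le> (2 * (lam_b / 4) * C0 + real CARD('n) * real CARD('n) * ((lam_a + lam_c) / 4) * C1) * ((1 + r x) ^ (qa + 1) * (1 + rpow0 (r x) (q - 1)))"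
      using b1 b2 by (simp add: algebra_simps)
    also have "\<dots> \<le> (2 * (lam_b / 4) * C0 + real CARD('n) * real CARD('n) * ((lam_a + lam_c) / 4) * C1) * (8 * (1 + r x powr e))"
      using polyb[of x] lams C_pos by (intro mult_left_mono) auto
    finally show ?thesis unfolding K2_def by (simp only: mult_ac)
  qed
  have SDb: "\<bar>\<Sum>j\<in>UNIV. D j x\<bar> \<le> K2 * (p x * (1 + r x powr e))" for x
  proof -
    have "\<bar>\<Sum>j\<in>UNIV. D j x\<bar> = p x * \<bar>stein_op p m g x\<bar>" unfolding stein_eq[of x, symmetric] using px[of x] by (simp add: abs_mult)
    also have "\<dots> \<le> p x * (K2 * (1 + r x powr e))" using px[of x] Sb[of x] by (intro mult_left_mono) auto
    finally show ?thesis by (simp only: mult_ac)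
  qed
  have intS: "integrable lborel (\<lambda>x. \<Sum>j\<in>UNIV. D j x)"
    by (rule Bochner_Integration.integrable_bound[OF integrable_mult_right[OF intw, of K2]])
       (measurable, intro AE_I2, metis SDb r_def real_norm_def abs_ge_self order_trans)
  have mF[measurable]: "F j \<in> borel_measurable borel" for j using contF by (rule borel_measurable_continuous_onI)
  have intF: "integrable lborel (F j)" for j
    by (rule Bochner_Integration.integrable_bound[OF integrable_mult_right[OF intw, of "real CARD('n) * ((lam_a + lam_c) / 4) * C0 * 8"]])
       (measurable, intro AE_I2, metis Fb r_def real_norm_def abs_ge_self order_trans)
  have zero: "(\<integral>x. (\<Sum>j\<in>UNIV. D j x) \<partial>lborel) = 0"
    by (rule div_zero[OF Fd contF contD intF intS])
  have peq: "(\<lambda>x. p x *\<^sub>R stein_op p m g x) = (\<lambda>x. \<Sum>j\<in>UNIV. D j x)"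
    using stein_eq by simp
  have "integrable P (stein_op p m g)"
    unfolding P_def by (subst integrable_density) (use intS peq px in \<open>auto intro: less_imp_le\<close>)
  moreover have "(\<integral>x. stein_op p m g x \<partial>P) = 0"
    unfolding P_def by (subst integral_density) (use zero peq px in \<open>auto intro: less_imp_le\<close>)
  ultimately show ?thesis unfolding m_def by simp
qed


end
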